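(* Under the standing assumptions below, for every $\alpha\in[\alpha_{\min},\alpha_{\max}]$, $$\dim_H\Big\{\mathbf i\in\Sigma:\liminf_{m\to\infty}\frac{\log\|A_{\mathbf i|_m}\|}{\log\lambda_{\mathbf i|_m}}\le\alpha\Big\}\le\inf_{t\ge0}\{t\alpha-P(t)\}$$ and $$\dim_H\Big\{\mathbf i\in\Sigma:\limsup_{m\to\infty}\frac{\log\|A_{\mathbf i|_m}\|}{\log\lambda_{\mathbf i|_m}}\ge\alpha\Big\}\le\inf_{t\le0}\{t\alpha-P(t)\}.$$
   Context: Standing assumptions: $A_0,\dots,A_{N-1}$ invertible real $d\times d$ matrices of norm $<1$ with dominated splitting of index-1 (there is a nonempty open $M\subset\mathbb{PR}^{d-1}$ with finitely many components with pairwise disjoint closures, $\bigcup_iA_i\overline M\subset M^o$ under the projective action, and some hyperplane transverse to all elements of $\overline M$); $\lambda$ a probability vector with positive entries. Norms are Euclidean operator norms. $\Sigma=\{0,\dots,N-1\}^{\mathbb N}$, $\mathbf i|_m=i_1\dots i_m$, $A_{\bar\imath}=A_{i_1}\cdots A_{i_k}$, $\lambda_{\bar\imath}=\lambda_{i_1}\cdots\lambda_{i_k}$. $\mathbf i\wedge\mathbf j$ is the length of the longest common prefix; $\Sigma$ carries the metric $d(\mathbf i,\mathbf j)=\lambda_{\mathbf i|_{\mathbf i\wedge\mathbf j}}$ and $\dim_H$ refers to it. Pressure: $P(t)$ is the unique real with $\lim_n\frac1n\log\sum_{|\bar\imath|=n}\|A_{\bar\imath}\|^t\lambda_{\bar\imath}^{-P(t)}=0$;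 $\alpha_{\min}=\lim_{t\to+\infty}P(t)/t$, $\alpha_{\max}=\lim_{t\to-\infty}P(t)/t$. *)

theory Defs
  imports "HOL-Analysis.Analysis"
begin

definition opnorm :: "real^'d^'d \<Rightarrow> real" where
  "opnorm M = onorm (\<lambda>x. M *v x)"

definition words :: "nat \<Rightarrow> nat \<Rightarrow> nat list set" where
  "words N n = {w. length w = n \<and> set w \<subseteq> {..<N}}"

definition Aw :: "(nat \<Rightarrow> real^'d^'d) \<Rightarrow> nat list \<Rightarrow> real^'d^'d" where
  "Aw A w = foldr (\<lambda>i M. A i ** M) w (mat 1)"

definition lamw :: "(nat \<Rightarrow> real) \<Rightarrow> nat list \<Rightarrow> real" where
  "lamw lam w = prod_list (map lam w)"

text \<open>Sigma = {0..N-1}^IN, sequences indexed from 0 (i 0 plays the role of i_1).\<close>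
definition symspace :: "nat \<Rightarrow> (nat \<Rightarrow> nat) set" where
  "symspace N = {i. \<forall>n. i n < N}"

definition pref :: "(nat \<Rightarrow> nat) \<Rightarrow> nat \<Rightarrow> nat list" where
  "pref i m = map i [0..<m]"

text \<open>Length of the longest common prefix (for i different from j).\<close>
definition cpl :: "(nat \<Rightarrow> nat) \<Rightarrow> (nat \<Rightarrow> nat) \<Rightarrow> nat" where
  "cpl i j = (LEAST n. i n \<noteq> j n)"

definition symdist :: "(nat \<Rightarrow> real) \<Rightarrow> (nat \<Rightarrow> nat) \<Rightarrow> (nat \<Rightarrow> nat) \<Rightarrow> real" where
  "symdist lam i j = (if i = j then 0 else lamw lam (pref i (cpl i j)))"

definition sdiam :: "('a \<Rightarrow> 'a \<Rightarrow> real) \<Rightarrow> 'a set \<Rightarrow> real" where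
  "sdiam d U = (if U = {} then 0 else (SUP x\<in>U. SUP y\<in>U. d x y))"

definition hausdorff_pre ::
  "'a set \<Rightarrow> ('a \<Rightarrow> 'a \<Rightarrow> real) \<Rightarrow> real \<Rightarrow> real \<Rightarrow> 'a set \<Rightarrow> ennreal" where
  "hausdorff_pre X d s \<delta> E =
     (INF U \<in> {U :: nat \<Rightarrow> 'a set. (\<forall>k. U k \<subseteq> X \<and> sdiam d (U k) \<le> \<delta>) \<and> E \<subseteq> (\<Union>k. U k)}.
        (\<Sum>k. ennreal (sdiam d (U k) powr s)))"

definition hausdorff_outer ::
  "'a set \<Rightarrow> ('a \<Rightarrow> 'a \<Rightarrow> real) \<Rightarrow> real \<Rightarrow> 'a set \<Rightarrow> ennreal" where
  "hausdorff_outer X d s E = (SUP \<delta> \<in> {0<..}. hausdorff_pre X d s \<delta> E)"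

definition hausdorff_dim :: "'a set \<Rightarrow> ('a \<Rightarrow> 'a \<Rightarrow> real) \<Rightarrow> 'a set \<Rightarrow> ereal" where
  "hausdorff_dim X d E = (INF s \<in> {s. 0 < s \<and> hausdorff_outer X d s E = 0}. ereal s)"

text \<open>A line [v] (v nonzero) is represented by the orthogonal projection matrix
  v v^T / |v|^2; this embeds PR^{d-1} homeomorphically into the matrix space.\<close>
definition pline :: "real^'d \<Rightarrow> real^'d^'d" where
  "pline v = (\<chi> i j. v$i * v$j / (v \<bullet> v))"

definition projspace :: "(real^'d^'d) set" where
  "projspace = {pline v | v :: real^'d. v \<noteq> 0}"

definition ptop :: "(real^'d^'d) topology" where
  "ptop = top_of_set (projspace :: (real^'d^'d) set)"

definition pimage :: "real^'d^'d \<Rightarrow> (real^'d^'d) set \<Rightarrow> (real^'d^'d) set" where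
  "pimage B S = {pline (B *v v) | v. v \<noteq> 0 \<and> pline v \<in> S}"

definition dominated_index1 :: "nat \<Rightarrow> (nat \<Rightarrow> real^'d^'d) \<Rightarrow> bool" where
  "dominated_index1 N A \<longleftrightarrow>
    (\<exists>M. M \<noteq> {} \<and> openin ptop M \<and> finite (components M)
       \<and> (\<forall>C\<in>components M. \<forall>C'\<in>components M. C \<noteq> C' \<longrightarrow>
              ptop closure_of C \<inter> ptop closure_of C' = {})
       \<and> (\<forall>i<N. pimage (A i) (ptop closure_of M) \<subseteq> ptop interior_of M)
       \<and> (\<exists>n :: real^'d. n \<noteq> 0 \<and>
              (\<forall>v. v \<noteq> 0 \<and> pline v \<in> ptop closure_of M \<longrightarrow> n \<bullet> v \<noteq> 0)))"

definition pressure :: "nat \<Rightarrow> (nat \<Rightarrow> real^'d^'d) \<Rightarrow> (nat \<Rightarrow> real) \<Rightarrow> real \<Rightarrow> real" where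
  "pressure N A lam t =
     (THE p. (\<lambda>n. ln (\<Sum>w\<in>words N n. opnorm (Aw A w) powr t * lamw lam w powr (- p)) / real n)
               \<longlonglongrightarrow> 0)"

definition alpha_min :: "nat \<Rightarrow> (nat \<Rightarrow> real^'d^'d) \<Rightarrow> (nat \<Rightarrow> real) \<Rightarrow> real" where
  "alpha_min N A lam = Lim at_top (\<lambda>t. pressure N A lam t / t)"

definition alpha_max :: "nat \<Rightarrow> (nat \<Rightarrow> real^'d^'d) \<Rightarrow> (nat \<Rightarrow> real) \<Rightarrow> real" where
  "alpha_max N A lam = Lim at_bot (\<lambda>t. pressure N A lam t / t)"

definition lyap_ratio :: "(nat \<Rightarrow> real^'d^'d) \<Rightarrow> (nat \<Rightarrow> real) \<Rightarrow> (nat \<Rightarrow> nat) \<Rightarrow> nat \<Rightarrow> real" where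
  "lyap_ratio A lam i m = ln (opnorm (Aw A (pref i m))) / ln (lamw lam (pref i m))"

end

theory Submission
  imports Defs
begin


lemma fekete_aux:
  fixes a :: "nat \<Rightarrow> real"
  assumes sub: "\<And>m n. a (m+n) \<le> a m + a n"
  shows "a (q*m + r) \<le> real q * a m + a r"
proof (induction q)
  case 0 then show ?case by simp
next
  case (Suc q)
  have "a (Suc q * m + r) = a (m + (q*m + r))" by (simp add: algebra_simps)
  also have "\<dots> \<le> a m + a (q*m+r)" by (rule sub)
  also have "\<dots> \<le> a m + (real q * a m + a r)" using Suc by simp
  finally show ?case by (simp add: algebra_simps)
qed

lemma fekete:
  fixes a :: "nat \<Rightarrow> real"
  assumes sub: "\<And>m n. a (m+n) \<le> a m + a n"
    and lb: "\<And>n. a n \<ge> - K * real n"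
  shows "convergent (\<lambda>n. a n / real n)"
proof -
  define S where "S = (\<lambda>n. a n / real n) ` {1..}"
  have Sne: "S \<noteq> {}" unfolding S_def by auto
  have Sbdd: "bdd_below S" unfolding S_def bdd_below_def
  proof (intro exI ballI)
    fix y assume "y \<in> (\<lambda>n. a n / real n) ` {1..}"
    then obtain n where n: "n \<ge> 1" "y = a n / real n" by auto
    have "-K * real n \<le> a n" by (rule lb)
    then have "-K * real n / real n \<le> a n / real n" using n(1) by (intro divide_right_mono) auto
    then show "-K \<le> y" using n by simp
  qed
  define L where "L = Inf S"
  have geL: "a n / real n \<ge> L" if "n \<ge> 1" for n
    unfolding L_def S_def using Sbdd that unfolding S_def by (intro cInf_lower) auto
  have "(\<lambda>n. a n / real n) \<longlonglongrightarrow> L"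
  proof (rule LIMSEQ_I)
    fix r :: real assume r: "0 < r"
    have "Inf S < L + r/2" using r L_def by simp
    then obtain y where "y \<in> S" "y < L + r/2" using cInf_lessD[OF Sne] by blast
    then obtain m where m: "m \<ge> 1" "a m / real m < L + r/2" unfolding S_def by auto
    define B where "B = Max ((\<lambda>k. \<bar>a k\<bar>) ` {..<m})"
    have B: "a k \<le> B" if "k < m" for k
    proof -
      have "\<bar>a k\<bar> \<le> B" unfolding B_def using that by (intro Max_ge) auto
      then show ?thesis by simp
    qed
    define C where "C = \<bar>a m\<bar> + \<bar>B\<bar>"
    obtain n0 :: nat where n0: "C / (r/2) < real n0" using reals_Archimedean2 by blast
    show "\<exists>no. \<forall>n\<ge>no. norm (a n / real n - L) < r"
    proof (intro exI allI impI)
      fix n assume nn: "n \<ge> Suc n0"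
      then have n1: "n \<ge> 1" and npos: "real n > 0" by auto
      define q where "q = n div m"
      have ndec: "n = q*m + n mod m" unfolding q_def by simp
      have "a n \<le> real q * a m + a (n mod m)"
        using fekete_aux[of a q m "n mod m", OF sub] ndec by simp
      also have "\<dots> \<le> real q * a m + B" using B m(1) by simp
      finally have an: "a n \<le> real q * a m + B" .
      have qm1: "real q * real m \<le> real n"
        using ndec by (metis of_nat_le_iff of_nat_mult le_add1)
      have qm2: "real n < real q * real m + real m"
      proof -
        have "n mod m < m" using m(1) by simp
        then have "n < q*m + m" using ndec by linarith
        then show ?thesis by (metis of_nat_add of_nat_less_iff of_nat_mult)
      qed
      have key: "real q * a m \<le> real n * (a m / real m) + \<bar>a m\<bar>"
      proof (cases "a m \<ge> 0")
        case True
        have "real q * a m = (real q * real m) * (a m / real m)" using m(1) by simp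
        also have "\<dots> \<le> real n * (a m / real m)"
          using qm1 True by (intro mult_right_mono) auto
        finally show ?thesis by simp
      next
        case False
        have "real q * a m = (real q * real m) * (a m / real m)" using m(1) by simp
        also have "\<dots> \<le> (real n - real m) * (a m / real m)"
          using qm2 False m(1) by (intro mult_right_mono_neg) (auto simp: divide_nonpos_pos)
        also have "\<dots> = real n * (a m / real m) - a m" using m(1) by (simp add: field_simps)
        finally show ?thesis using False by simp
      qed
      have "a n \<le> real n * (a m / real m) + C" using an key unfolding C_def by simp
      then have "a n / real n \<le> a m / real m + C / real n"
        using npos by (simp add: field_simps)
      moreover have "C / real n < r/2"
      proof -
        have C0: "C \<ge> 0" unfolding C_def by simp
        have "C < r/2 * real n0" using n0 r by (simp add: field_simps)
        also have "\<dots> \<le> r/2 * real n" using nn r by simp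
        finally show ?thesis using npos by (simp add: field_simps)
      qed
      ultimately have "a n / real n < L + r" using m(2) by linarith
      moreover have "a n / real n \<ge> L" using geL n1 by simp
      ultimately show "norm (a n / real n - L) < r" by simp
    qed
  qed
  then show ?thesis by (rule convergentI)
qed



lemma Aw_foldr: "foldr (\<lambda>i M. A i ** M) u M0 = Aw A u ** M0"
  unfolding Aw_def by (induction u) (auto simp: matrix_mul_assoc)

lemma Aw_append: "Aw A (u @ v) = Aw A u ** Aw A v"
  unfolding Aw_def foldr_append by (rule Aw_foldr[unfolded Aw_def])

lemma Aw_Nil: "Aw A [] = mat 1" by (simp add: Aw_def)
lemma Aw_Cons: "Aw A (i # u) = A i ** Aw A u" by (simp add: Aw_def)

lemma lamw_append: "lamw lam (u @ v) = lamw lam u * lamw lam v"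
  by (simp add: lamw_def)
lemma lamw_Nil: "lamw lam [] = 1" by (simp add: lamw_def)
lemma lamw_Cons: "lamw lam (i # u) = lam i * lamw lam u" by (simp add: lamw_def)

lemma opnorm_mult: "opnorm (M ** P) \<le> opnorm M * opnorm (P :: real^'d^'d)"
proof -
  have "(\<lambda>x. (M ** P) *v x) = ((*v) M) \<circ> ((*v) P)"
    by (auto simp: matrix_vector_mul_assoc)
  then show ?thesis unfolding opnorm_def
    using onorm_compose[of "(*v) M" "(*v) P"] by simp
qed

lemma opnorm_nonneg: "0 \<le> opnorm (M :: real^'d^'d)"
  unfolding opnorm_def by (rule onorm_pos_le) simp

lemma opnorm_mat1: "opnorm (mat 1 :: real^'d^'d) = 1"
proof -
  have "(*v) (mat 1 :: real^'d^'d) = (\<lambda>x. x)" by (rule ext) (simp add: matrix_vector_mul_lid)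
  then show ?thesis unfolding opnorm_def by (simp add: onorm_id)
qed

lemma opnorm_apply: "norm (M *v x) \<le> opnorm M * norm (x :: real^'d)"
  unfolding opnorm_def by (rule onorm) simp

lemma opnorm_ge: "norm (M *v axis k 1) \<le> opnorm (M :: real^'d^'d)"
  using opnorm_apply[of M "axis k 1"] by (simp add: norm_axis_1)

lemma words_Suc: "words N (Suc n) = (\<lambda>(i,w). i # w) ` ({..<N} \<times> words N n)"
  unfolding words_def by (auto simp: image_iff length_Suc_conv)

lemma finite_words: "finite (words N n)"
proof -
  have "words N n = {xs. set xs \<subseteq> {..<N} \<and> length xs = n}" unfolding words_def by auto
  then show ?thesis using finite_lists_length_eq[of "{..<N}" n] by simp
qed

lemma words_add: "words N (m + n) = (\<lambda>(u,v). u @ v) ` (words N m \<times> words N n)"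
proof (intro set_eqI iffI)
  fix w assume "w \<in> words N (m+n)"
  then have "w = take m w @ drop m w" "take m w \<in> words N m" "drop m w \<in> words N n"
    unfolding words_def by (auto dest: in_set_takeD in_set_dropD)
  then show "w \<in> (\<lambda>(u,v). u @ v) ` (words N m \<times> words N n)"
    by (intro image_eqI[where x="(take m w, drop m w)"]) auto
qed (auto simp: words_def)

lemma words_add_inj: "inj_on (\<lambda>(u,v). u @ v) (words N m \<times> words N n)"
  by (auto simp: inj_on_def words_def)

lemma sum_words_add:
  "(\<Sum>w\<in>words N (m+n). f w) = (\<Sum>u\<in>words N m. \<Sum>v\<in>words N n. f (u @ v))"
proof -
  have "(\<Sum>w\<in>words N (m+n). f w) = (\<Sum>x\<in>words N m \<times> words N n. f (case x of (u,v) \<Rightarrow> u @ v))"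
    unfolding words_add by (rule sum.reindex[OF words_add_inj, unfolded comp_def])
  then show ?thesis by (simp add: sum.cartesian_product split_beta)
qed

lemma words_ne: "0 < N \<Longrightarrow> words N n \<noteq> {}"
proof -
  assume "0 < N"
  then have "replicate n 0 \<in> words N n" by (auto simp: words_def set_replicate_conv_if)
  then show ?thesis by blast
qed

lemma pref_words: "i \<in> symspace N \<Longrightarrow> pref i m \<in> words N m"
  by (auto simp: pref_def words_def symspace_def)

lemma length_pref[simp]: "length (pref i m) = m" by (simp add: pref_def)

lemma pref_add: "pref i (m + k) = pref i m @ map i [m..<m+k]"
  unfolding pref_def using upt_add_eq_append[of 0 m k] by simp



locale sys =
  fixes N :: nat and A :: "nat \<Rightarrow> real^'d^'d" and lam :: "nat \<Rightarrow> real"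
  assumes N2: "2 \<le> N"
    and inv: "\<forall>i<N. invertible (A i)"
    and contr: "\<forall>i<N. opnorm (A i) < 1"
    and lam_pos: "\<forall>i<N. 0 < lam i"
    and lam_sum: "(\<Sum>i<N. lam i) = 1"
begin

definition lmax where "lmax = Max (lam ` {..<N})"
definition lmin where "lmin = Min (lam ` {..<N})"

lemma lam_lt1: assumes "i < N" shows "lam i < 1"
proof -
  define j where "j = (if i = 0 then 1 else 0::nat)"
  have j: "j < N" "j \<noteq> i" using N2 unfolding j_def by auto
  have "(\<Sum>k\<in>{i,j}. lam k) \<le> (\<Sum>k<N. lam k)"
    using assms j lam_pos by (intro sum_mono2) auto
  then have "lam i + lam j \<le> 1" using j lam_sum by simp
  moreover have "0 < lam j" using lam_pos j by simp
  ultimately show ?thesis by simp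
qed

lemma lmax: "lmax < 1" "0 < lmax" "\<And>i. i < N \<Longrightarrow> lam i \<le> lmax"
  and lmin: "0 < lmin" "lmin \<le> lmax" "\<And>i. i < N \<Longrightarrow> lmin \<le> lam i"
proof -
  have ne: "lam ` {..<N} \<noteq> {}" using N2 by (auto simp: lessThan_empty_iff)
  show "lmax < 1" unfolding lmax_def using ne lam_lt1 by (subst Max_less_iff) auto
  show "0 < lmin" unfolding lmin_def using ne lam_pos by (subst Min_gr_iff) auto
  show *: "lam i \<le> lmax" if "i < N" for i unfolding lmax_def using that by (intro Max_ge) auto
  show **: "lmin \<le> lam i" if "i < N" for i unfolding lmin_def using that by (intro Min_le) auto
  show "lmin \<le> lmax" using *[of 0] **[of 0] N2 by simp
  show "0 < lmax" using *[of 0] lam_pos N2 by force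
qed

lemma lamw_bounds:
  assumes "w \<in> words N n"
  shows "lmin ^ n \<le> lamw lam w" "lamw lam w \<le> lmax ^ n" "0 < lamw lam w"
proof -
  have "set w \<subseteq> {..<N}" "length w = n" using assms by (auto simp: words_def)
  then have "lmin ^ n \<le> lamw lam w \<and> lamw lam w \<le> lmax ^ n \<and> 0 < lamw lam w"
  proof (induction w arbitrary: n)
    case Nil then show ?case by (simp add: lamw_Nil)
  next
    case (Cons i w)
    then obtain m where m: "n = Suc m" "length w = m" "i < N" "set w \<subseteq> {..<N}" by auto
    with Cons.IH have IH: "lmin ^ m \<le> lamw lam w" "lamw lam w \<le> lmax ^ m" "0 < lamw lam w" by auto
    have "lmin * lmin ^ m \<le> lam i * lamw lam w"
      using IH lmin m lam_pos by (intro mult_mono) auto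
    moreover have "lam i * lamw lam w \<le> lmax * lmax ^ m"
      using IH lmax m lam_pos by (intro mult_mono) auto
    moreover have "0 < lam i * lamw lam w" using IH lam_pos m by simp
    ultimately show ?case using m by (simp add: lamw_Cons)
  qed
  then show "lmin ^ n \<le> lamw lam w" "lamw lam w \<le> lmax ^ n" "0 < lamw lam w" by auto
qed

lemma lamw_le1: "w \<in> words N n \<Longrightarrow> lamw lam w \<le> 1"
  using lamw_bounds(2)[of w n] lmax power_le_one[of lmax n] by auto

definition sig where "sig = min 1 (Min ((\<lambda>i. 1 / (opnorm (SOME B. B ** A i = mat 1) + 1)) ` {..<N}))"

lemma stretch1: assumes "i < N" shows "sig * norm x \<le> norm (A i *v x)"
proof -
  define B where "B = (SOME B. B ** A i = mat 1)"
  have "\<exists>B. B ** A i = mat 1" using inv assms by (auto simp: invertible_def)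
  then have B: "B ** A i = mat 1" unfolding B_def by (rule someI_ex)
  have c: "sig \<le> 1 / (opnorm B + 1)" unfolding sig_def B_def using assms
    by (intro min.coboundedI2 Min_le) auto
  have "norm x = norm (B *v (A i *v x))" by (simp add: matrix_vector_mul_assoc B matrix_vector_mul_lid)
  also have "\<dots> \<le> opnorm B * norm (A i *v x)" by (rule opnorm_apply)
  also have "\<dots> \<le> (opnorm B + 1) * norm (A i *v x)" by (simp add: mult_right_mono)
  finally have "norm x / (opnorm B + 1) \<le> norm (A i *v x)"
    using opnorm_nonneg[of B] by (simp add: field_simps)
  moreover have "sig * norm x \<le> 1 / (opnorm B + 1) * norm x" using c by (intro mult_right_mono) auto
  ultimately show ?thesis by simp
qed

lemma sig_pos: "0 < sig" and sig_le1: "sig \<le> 1"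
proof -
  have "0 < Min ((\<lambda>i. 1 / (opnorm (SOME B. B ** A i = mat 1) + 1)) ` {..<N})"
    using N2 by (subst Min_gr_iff) (auto intro!: add_nonneg_pos opnorm_nonneg simp: lessThan_empty_iff)
  then show "0 < sig" unfolding sig_def by simp
  show "sig \<le> 1" unfolding sig_def by simp
qed

lemma stretch: assumes "w \<in> words N n" shows "sig ^ n * norm x \<le> norm (Aw A w *v x)"
proof -
  have "set w \<subseteq> {..<N}" "length w = n" using assms by (auto simp: words_def)
  then show ?thesis
  proof (induction w arbitrary: n x)
    case Nil then show ?case by (simp add: Aw_Nil matrix_vector_mul_lid)
  next
    case (Cons i w)
    then obtain m where m: "n = Suc m" "length w = m" "i < N" "set w \<subseteq> {..<N}" by auto
    have "sig ^ n * norm x = sig * (sig ^ m * norm x)" using m by simp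
    also have "\<dots> \<le> sig * norm (Aw A w *v x)" using Cons.IH m sig_pos by (intro mult_left_mono) auto
    also have "\<dots> \<le> norm (A i *v (Aw A w *v x))" using stretch1 m by simp
    finally show ?case by (simp add: Aw_Cons matrix_vector_mul_assoc)
  qed
qed

lemma opnorm_lower: "w \<in> words N n \<Longrightarrow> sig ^ n \<le> opnorm (Aw A w)"
  using stretch[of w n "axis undefined 1"] opnorm_ge[of "Aw A w" undefined] by (simp add: norm_axis_1)

lemma opnorm_pos: "w \<in> words N n \<Longrightarrow> 0 < opnorm (Aw A w)"
  using opnorm_lower[of w n] sig_pos by (meson order.strict_trans2 zero_less_power)

lemma opnorm_upper: "w \<in> words N n \<Longrightarrow> opnorm (Aw A w) \<le> 1"
proof (induction w arbitrary: n)
  case Nil then show ?case by (simp add: Aw_Nil opnorm_mat1)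
next
  case (Cons i w)
  then have iN: "i < N" and w: "w \<in> words N (n - 1)" by (auto simp: words_def)
  have "opnorm (Aw A (i # w)) \<le> opnorm (A i) * opnorm (Aw A w)" by (simp add: Aw_Cons opnorm_mult)
  also have "\<dots> \<le> 1 * 1" using contr iN Cons.IH[OF w] opnorm_nonneg
    by (intro mult_mono) (auto simp: less_imp_le)
  finally show ?case by simp
qed

end


context sys begin

definition tm :: "real \<Rightarrow> real \<Rightarrow> nat list \<Rightarrow> real" where
  "tm t p w = opnorm (Aw A w) powr t * lamw lam w powr (- p)"

definition Z :: "real \<Rightarrow> real \<Rightarrow> nat \<Rightarrow> real" where
  "Z t p n = (\<Sum>w\<in>words N n. tm t p w)"

lemma tm_exp: "w \<in> words N n \<Longrightarrow> tm t p w = exp (t * ln (opnorm (Aw A w)) - p * ln (lamw lam w))"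
  using opnorm_pos[of w n] lamw_bounds(3)[of w n]
  by (simp add: tm_def powr_def exp_diff exp_minus field_simps)

lemma tm_pos: "w \<in> words N n \<Longrightarrow> 0 < tm t p w"
  by (simp add: tm_exp)

lemma ln_bounds:
  assumes "w \<in> words N n"
  shows "real n * ln sig \<le> ln (opnorm (Aw A w))" "ln (opnorm (Aw A w)) \<le> 0"
    "real n * ln lmin \<le> ln (lamw lam w)" "ln (lamw lam w) \<le> real n * ln lmax"
proof -
  show "real n * ln sig \<le> ln (opnorm (Aw A w))"
    using opnorm_lower[OF assms] sig_pos by (subst ln_realpow[symmetric]) (auto intro: ln_mono)
  show "ln (opnorm (Aw A w)) \<le> 0" using opnorm_upper[OF assms] opnorm_pos[OF assms] by simp
  show "real n * ln lmin \<le> ln (lamw lam w)"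
    using lamw_bounds[OF assms] lmin by (subst ln_realpow[symmetric]) (auto intro: ln_mono)
  show "ln (lamw lam w) \<le> real n * ln lmax"
    using lamw_bounds[OF assms] lmax by (subst ln_realpow[symmetric]) (auto intro: ln_mono)
qed

lemma ln_sig: "ln sig \<le> 0" using sig_pos sig_le1 by simp
lemma ln_lmax: "ln lmax < 0" using lmax by simp
lemma ln_lmin: "ln lmin < 0" using lmin lmax by simp

definition K :: "real \<Rightarrow> real \<Rightarrow> real" where
  "K t p = \<bar>t\<bar> * \<bar>ln sig\<bar> + \<bar>p\<bar> * \<bar>ln lmin\<bar>"

lemma K_nonneg: "0 \<le> K t p" by (simp add: K_def)

lemma expo_bound:
  assumes "w \<in> words N n"
  shows "\<bar>t * ln (opnorm (Aw A w)) - p * ln (lamw lam w)\<bar> \<le> K t p * real n"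
proof -
  note b = ln_bounds[OF assms]
  have 1: "\<bar>ln (opnorm (Aw A w))\<bar> \<le> real n * \<bar>ln sig\<bar>" using b ln_sig by auto
  have "real n * ln lmax \<le> 0" using ln_lmax by (simp add: mult_nonneg_nonpos)
  then have "ln (lamw lam w) \<le> 0" using b(4) by linarith
  then have "\<bar>ln (lamw lam w)\<bar> = - ln (lamw lam w)" by simp
  also have "\<dots> \<le> - (real n * ln lmin)" using b(3) by linarith
  also have "\<dots> = real n * \<bar>ln lmin\<bar>" using ln_lmin by simp
  finally have 2: "\<bar>ln (lamw lam w)\<bar> \<le> real n * \<bar>ln lmin\<bar>" .
  have "\<bar>t * ln (opnorm (Aw A w)) - p * ln (lamw lam w)\<bar>
        \<le> \<bar>t\<bar> * \<bar>ln (opnorm (Aw A w))\<bar> + \<bar>p\<bar> * \<bar>ln (lamw lam w)\<bar>"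
    using abs_triangle_ineq4[of "t * ln (opnorm (Aw A w))" "p * ln (lamw lam w)"] by (simp add: abs_mult)
  also have "\<dots> \<le> \<bar>t\<bar> * (real n * \<bar>ln sig\<bar>) + \<bar>p\<bar> * (real n * \<bar>ln lmin\<bar>)"
    using 1 2 by (intro add_mono mult_left_mono) auto
  finally show ?thesis by (simp add: K_def algebra_simps)
qed

lemma card_words: "card (words N n) = N ^ n"
proof -
  have "words N n = {xs. set xs \<subseteq> {..<N} \<and> length xs = n}" unfolding words_def by auto
  then show ?thesis using card_lists_length_eq[of "{..<N}" n] by simp
qed

lemma Z_pos: "0 < Z t p n"
  unfolding Z_def using words_ne[of N n] N2 finite_words tm_pos
  by (intro sum_pos) auto

lemma Z_lower: "exp (- (K t p * real n)) \<le> Z t p n"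
proof -
  obtain w where w: "w \<in> words N n" using words_ne[of N n] N2 by auto
  have "exp (- (K t p * real n)) \<le> tm t p w"
    using expo_bound[OF w, of t p] by (simp add: tm_exp[OF w])
  also have "\<dots> \<le> Z t p n" unfolding Z_def using w finite_words tm_pos
    by (intro member_le_sum) (auto intro: less_imp_le)
  finally show ?thesis .
qed

lemma Z_upper: "Z t p n \<le> real N ^ n * exp (K t p * real n)"
proof -
  have "Z t p n \<le> (\<Sum>w\<in>words N n. exp (K t p * real n))"
    unfolding Z_def
  proof (rule sum_mono)
    fix w assume w: "w \<in> words N n"
    show "tm t p w \<le> exp (K t p * real n)"
      using expo_bound[OF w, of t p] by (simp add: tm_exp[OF w])
  qed
  also have "\<dots> = real N ^ n * exp (K t p * real n)" by (simp add: card_words)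
  finally show ?thesis .
qed

lemma lnZ_lower: "- K t p * real n \<le> ln (Z t p n)"
  using Z_lower[of t p n] Z_pos[of t p n] by (simp add: ln_ge_iff)

lemma lnZ_upper: "ln (Z t p n) \<le> (ln (real N) + K t p) * real n"
proof -
  have "ln (Z t p n) \<le> ln (real N ^ n * exp (K t p * real n))"
    using Z_upper Z_pos by (intro ln_mono) auto
  also have "\<dots> = (ln (real N) + K t p) * real n" using N2
    by (simp add: ln_mult ln_realpow algebra_simps)
  finally show ?thesis .
qed

lemma tm_append:
  assumes u: "u \<in> words N m" and v: "v \<in> words N n"
  shows "t \<ge> 0 \<Longrightarrow> tm t p (u @ v) \<le> tm t p u * tm t p v"
    and "t \<le> 0 \<Longrightarrow> tm t p (u @ v) \<ge> tm t p u * tm t p v"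
proof -
  have uv: "u @ v \<in> words N (m + n)" using u v by (auto simp: words_def)
  have le: "opnorm (Aw A (u@v)) \<le> opnorm (Aw A u) * opnorm (Aw A v)"
    by (simp add: Aw_append opnorm_mult)
  have lam: "lamw lam (u@v) powr (-p) = lamw lam u powr (-p) * lamw lam v powr (-p)"
    using lamw_bounds(3)[OF u] lamw_bounds(3)[OF v] by (simp add: lamw_append powr_mult)
  have pu: "0 < opnorm (Aw A u)" and pv: "0 < opnorm (Aw A v)" and puv: "0 < opnorm (Aw A (u@v))"
    using opnorm_pos u v uv by auto
  have lp: "0 \<le> lamw lam u powr (-p) * lamw lam v powr (-p)" by simp
  show "t \<ge> 0 \<Longrightarrow> tm t p (u @ v) \<le> tm t p u * tm t p v"
  proof -
    assume t: "t \<ge> 0"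
    have "opnorm (Aw A (u@v)) powr t \<le> (opnorm (Aw A u) * opnorm (Aw A v)) powr t"
      using le t puv by (intro powr_mono2) auto
    also have "\<dots> = opnorm (Aw A u) powr t * opnorm (Aw A v) powr t" using pu pv by (simp add: powr_mult)
    finally have "tm t p (u@v) \<le> (opnorm (Aw A u) powr t * opnorm (Aw A v) powr t) * (lamw lam u powr (-p) * lamw lam v powr (-p))"
      unfolding tm_def lam using lp by (intro mult_right_mono) auto
    then show ?thesis by (simp add: tm_def algebra_simps)
  qed
  show "t \<le> 0 \<Longrightarrow> tm t p (u @ v) \<ge> tm t p u * tm t p v"
  proof -
    assume t: "t \<le> 0"
    have "opnorm (Aw A (u@v)) powr t \<ge> (opnorm (Aw A u) * opnorm (Aw A v)) powr t"
      using le t puv by (intro powr_mono2') auto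
    moreover have "(opnorm (Aw A u) * opnorm (Aw A v)) powr t = opnorm (Aw A u) powr t * opnorm (Aw A v) powr t" using pu pv by (simp add: powr_mult)
    ultimately have "tm t p (u@v) \<ge> (opnorm (Aw A u) powr t * opnorm (Aw A v) powr t) * (lamw lam u powr (-p) * lamw lam v powr (-p))"
      unfolding tm_def lam using lp by (intro mult_right_mono) auto
    then show ?thesis by (simp add: tm_def algebra_simps)
  qed
qed

lemma Z_submult: "t \<ge> 0 \<Longrightarrow> Z t p (m + n) \<le> Z t p m * Z t p n"
  and Z_supermult: "t \<le> 0 \<Longrightarrow> Z t p (m + n) \<ge> Z t p m * Z t p n"
proof -
  have eq: "Z t p (m+n) = (\<Sum>u\<in>words N m. \<Sum>v\<in>words N n. tm t p (u @ v))"
    unfolding Z_def by (rule sum_words_add)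
  have prod: "Z t p m * Z t p n = (\<Sum>u\<in>words N m. \<Sum>v\<in>words N n. tm t p u * tm t p v)"
    unfolding Z_def by (simp add: sum_product)
  show "t \<ge> 0 \<Longrightarrow> Z t p (m + n) \<le> Z t p m * Z t p n"
    unfolding eq prod by (intro sum_mono tm_append(1)) auto
  show "t \<le> 0 \<Longrightarrow> Z t p (m + n) \<ge> Z t p m * Z t p n"
    unfolding eq prod by (intro sum_mono tm_append(2)) auto
qed

lemma F_convergent: "convergent (\<lambda>n. ln (Z t p n) / real n)"
proof (cases "t \<ge> 0")
  case True
  show ?thesis
  proof (rule fekete[where K="K t p"])
    fix m n
    have "ln (Z t p (m+n)) \<le> ln (Z t p m * Z t p n)"
      using Z_submult[OF True] Z_pos by (intro ln_mono) (auto intro: mult_pos_pos)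
    then show "ln (Z t p (m+n)) \<le> ln (Z t p m) + ln (Z t p n)" using Z_pos[of t p m] Z_pos[of t p n] by (simp add: ln_mult)
  qed (rule lnZ_lower)
next
  case False
  have "convergent (\<lambda>n. - ln (Z t p n) / real n)"
  proof (rule fekete[where K="ln (real N) + K t p"])
    fix m n
    have "ln (Z t p (m+n)) \<ge> ln (Z t p m * Z t p n)"
      using Z_supermult[of t] False Z_pos by (intro ln_mono) (auto intro: mult_pos_pos)
    then show "- ln (Z t p (m+n)) \<le> - ln (Z t p m) + - ln (Z t p n)" using Z_pos[of t p m] Z_pos[of t p n] by (simp add: ln_mult)
  next
    fix n show "- (ln (real N) + K t p) * real n \<le> - ln (Z t p n)"
      using lnZ_upper[of t p n] by (simp add: algebra_simps)
  qed
  then obtain L where "(\<lambda>n. - ln (Z t p n) / real n) \<longlonglongrightarrow> L" by (auto simp: convergent_def)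
  then have "(\<lambda>n. - (- ln (Z t p n) / real n)) \<longlonglongrightarrow> - L" by (rule tendsto_minus)
  then show ?thesis by (auto simp: convergent_def)
qed

definition F :: "real \<Rightarrow> real \<Rightarrow> real" where
  "F t p = lim (\<lambda>n. ln (Z t p n) / real n)"

lemma F_lim: "(\<lambda>n. ln (Z t p n) / real n) \<longlonglongrightarrow> F t p"
  unfolding F_def using F_convergent by (simp add: convergent_LIMSEQ_iff)

end


context sys begin

lemma Z_shift:
  assumes pq: "p \<le> q"
  shows "Z t p n * exp ((q - p) * real n * (- ln lmax)) \<le> Z t q n"
    and "Z t q n \<le> Z t p n * exp ((q - p) * real n * (- ln lmin))"
proof -
  have tq: "tm t q w = tm t p w * exp ((q - p) * (- ln (lamw lam w)))" if w: "w \<in> words N n" for w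
    by (simp add: tm_exp[OF w] exp_add[symmetric] algebra_simps)
  have "Z t p n * exp ((q - p) * real n * (- ln lmax)) = (\<Sum>w\<in>words N n. tm t p w * exp ((q - p) * real n * (- ln lmax)))"
    unfolding Z_def by (simp add: sum_distrib_right)
  also have "\<dots> \<le> Z t q n" unfolding Z_def
  proof (rule sum_mono)
    fix w assume w: "w \<in> words N n"
    have "(q - p) * (real n * ln lmax) \<ge> (q - p) * ln (lamw lam w)"
      using ln_bounds(4)[OF w] pq by (intro mult_left_mono) auto
    then have "exp ((q - p) * real n * (- ln lmax)) \<le> exp ((q - p) * (- ln (lamw lam w)))" by (simp add: algebra_simps)
    then show "tm t p w * exp ((q - p) * real n * (- ln lmax)) \<le> tm t q w"
      unfolding tq[OF w] using less_imp_le[OF tm_pos[OF w]] by (intro mult_left_mono) auto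
  qed
  finally show "Z t p n * exp ((q - p) * real n * (- ln lmax)) \<le> Z t q n" .
  have "Z t q n \<le> (\<Sum>w\<in>words N n. tm t p w * exp ((q - p) * real n * (- ln lmin)))" unfolding Z_def
  proof (rule sum_mono)
    fix w assume w: "w \<in> words N n"
    have "(q - p) * (real n * ln lmin) \<le> (q - p) * ln (lamw lam w)"
      using ln_bounds(3)[OF w] pq by (intro mult_left_mono) auto
    then have "exp ((q - p) * real n * (- ln lmin)) \<ge> exp ((q - p) * (- ln (lamw lam w)))" by (simp add: algebra_simps)
    then show "tm t q w \<le> tm t p w * exp ((q - p) * real n * (- ln lmin))"
      unfolding tq[OF w] using less_imp_le[OF tm_pos[OF w]] by (intro mult_left_mono) auto
  qed
  also have "\<dots> = Z t p n * exp ((q - p) * real n * (- ln lmin))"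
    unfolding Z_def by (simp add: sum_distrib_right)
  finally show "Z t q n \<le> Z t p n * exp ((q - p) * real n * (- ln lmin))" .
qed

lemma F_shift:
  assumes pq: "p \<le> q"
  shows "F t p + (q - p) * (- ln lmax) \<le> F t q" and "F t q \<le> F t p + (q - p) * (- ln lmin)"
proof -
  have l1: "(\<lambda>n. ln (Z t p n) / real n + (q - p) * (- ln lmax)) \<longlonglongrightarrow> F t p + (q - p) * (- ln lmax)"
    by (intro tendsto_add F_lim tendsto_const)
  have l2: "(\<lambda>n. ln (Z t p n) / real n + (q - p) * (- ln lmin)) \<longlonglongrightarrow> F t p + (q - p) * (- ln lmin)"
    by (intro tendsto_add F_lim tendsto_const)
  have i1: "ln (Z t p n) / real n + (q - p) * (- ln lmax) \<le> ln (Z t q n) / real n" if n: "n \<ge> 1" for n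
  proof -
    have "ln (Z t p n * exp ((q - p) * real n * (- ln lmax))) \<le> ln (Z t q n)"
      using Z_shift(1)[OF pq, of t n] Z_pos by (intro ln_mono) auto
    then have "ln (Z t p n) + (q - p) * real n * (- ln lmax) \<le> ln (Z t q n)"
      using Z_pos[of t p n] by (simp add: ln_mult)
    then have "(ln (Z t p n) + (q - p) * real n * (- ln lmax)) / real n \<le> ln (Z t q n) / real n"
      using n by (intro divide_right_mono) auto
    then show ?thesis using n by (simp add: field_simps)
  qed
  have i2: "ln (Z t q n) / real n \<le> ln (Z t p n) / real n + (q - p) * (- ln lmin)" if n: "n \<ge> 1" for n
  proof -
    have "ln (Z t q n) \<le> ln (Z t p n * exp ((q - p) * real n * (- ln lmin)))"
      using Z_shift(2)[OF pq, of t n] Z_pos by (intro ln_mono) auto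
    then have "ln (Z t q n) \<le> ln (Z t p n) + (q - p) * real n * (- ln lmin)"
      using Z_pos[of t p n] by (simp add: ln_mult)
    then have "ln (Z t q n) / real n \<le> (ln (Z t p n) + (q - p) * real n * (- ln lmin)) / real n"
      using n by (intro divide_right_mono) auto
    then show ?thesis using n by (simp add: field_simps)
  qed
  show "F t p + (q - p) * (- ln lmax) \<le> F t q"
    using LIMSEQ_le[OF l1 F_lim[of t q]] i1 by blast
  show "F t q \<le> F t p + (q - p) * (- ln lmin)"
    using LIMSEQ_le[OF F_lim[of t q] l2] i2 by blast
qed

lemma F_strict: "p < q \<Longrightarrow> F t p < F t q"
  using F_shift(1)[of p q t] ln_lmax by (smt (verit) mult_pos_pos)

lemma F_cont: "continuous_on S (F t)"
proof (rule lipschitz_on_continuous_on[where L="- ln lmin"], rule lipschitz_onI)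
  show "0 \<le> - ln lmin" using ln_lmin by simp
  fix x y
  show "dist (F t x) (F t y) \<le> - ln lmin * dist x y"
  proof (cases "x \<le> y")
    case True
    have "0 \<le> (y - x) * (- ln lmax)" using ln_lmax True by (intro mult_nonneg_nonneg) auto
    then have "F t x \<le> F t y" "F t y \<le> F t x + (y - x) * (- ln lmin)"
      using F_shift[OF True, of t] by linarith+
    moreover have "- ln lmin * dist x y = (y - x) * (- ln lmin)" using True by (simp add: dist_real_def)
    ultimately show ?thesis unfolding dist_real_def abs_le_iff by linarith
  next
    case False
    then have yx: "y \<le> x" by simp
    have "0 \<le> (x - y) * (- ln lmax)" using ln_lmax yx by (intro mult_nonneg_nonneg) auto
    then have "F t y \<le> F t x" "F t x \<le> F t y + (x - y) * (- ln lmin)"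
      using F_shift[OF yx, of t] by linarith+
    moreover have "- ln lmin * dist x y = (x - y) * (- ln lmin)" using yx by (simp add: dist_real_def)
    ultimately show ?thesis unfolding dist_real_def abs_le_iff by linarith
  qed
qed

lemma F_zero_ex: "\<exists>p. F t p = 0"
proof -
  define c where "c = \<bar>F t 0\<bar> / (- ln lmax)"
  have c: "0 \<le> c" "c * (- ln lmax) = \<bar>F t 0\<bar>" using ln_lmax by (auto simp: c_def divide_nonneg_neg)
  have "F t (-c) \<le> 0"
    using F_shift(1)[of "-c" 0 t] c by (auto simp: algebra_simps)
  moreover have "0 \<le> F t c"
    using F_shift(1)[of 0 c t] c by (auto simp: algebra_simps)
  ultimately show ?thesis using IVT'[of "F t" "-c" 0 c] F_cont c by auto
qed

abbreviation P where "P t \<equiv> pressure N A lam t"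

lemma pressure_eq: "P t = (THE p. (\<lambda>n. ln (Z t p n) / real n) \<longlonglongrightarrow> 0)"
  by (simp add: pressure_def Z_def tm_def)

lemma P_lim: "(\<lambda>n. ln (Z t (P t) n) / real n) \<longlonglongrightarrow> 0" and P_F: "F t (P t) = 0"
proof -
  have ex1: "\<exists>!p. (\<lambda>n. ln (Z t p n) / real n) \<longlonglongrightarrow> 0"
  proof -
    obtain p where p: "F t p = 0" using F_zero_ex by blast
    show ?thesis
    proof (rule ex1I[of _ p])
      show "(\<lambda>n. ln (Z t p n) / real n) \<longlonglongrightarrow> 0" using F_lim[of t p] p by simp
      fix q assume "(\<lambda>n. ln (Z t q n) / real n) \<longlonglongrightarrow> 0"
      then have "F t q = 0" using F_lim[of t q] LIMSEQ_unique by blast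
      then show "q = p" using p F_strict[of p q t] F_strict[of q p t] by (cases "p < q"; cases "q < p") auto
    qed
  qed
  show l: "(\<lambda>n. ln (Z t (P t) n) / real n) \<longlonglongrightarrow> 0"
    unfolding pressure_eq using theI'[OF ex1] .
  show "F t (P t) = 0" using F_lim[of t "P t"] l LIMSEQ_unique by blast
qed

lemma P_le: "0 \<le> F t p \<Longrightarrow> P t \<le> p"
  using F_strict[of p "P t" t] P_F[of t] by fastforce

lemma P_ge: "F t p \<le> 0 \<Longrightarrow> p \<le> P t"
  using F_strict[of "P t" p t] P_F[of t] by fastforce

lemma F_nonneg_if: assumes "\<And>n. 1 \<le> Z t p n" shows "0 \<le> F t p"
proof (rule LIMSEQ_le_const[OF F_lim], intro exI allI impI)
  fix n :: nat assume "n \<ge> 0"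
  have "0 \<le> ln (Z t p n)" using assms[of n] by simp
  then show "0 \<le> ln (Z t p n) / real n" by simp
qed

lemma Z_ge1_if: assumes "\<And>n w. w \<in> words N n \<Longrightarrow> 1 \<le> tm t p w" shows "1 \<le> Z t p n"
proof -
  obtain w where w: "w \<in> words N n" using words_ne[of N n] N2 by auto
  have "1 \<le> tm t p w" using assms w .
  also have "\<dots> \<le> Z t p n" unfolding Z_def using w finite_words tm_pos
    by (intro member_le_sum) (auto intro: less_imp_le)
  finally show ?thesis .
qed

lemma P_nonpos: assumes "t \<le> 0" shows "P t \<le> 0"
proof (rule P_le, rule F_nonneg_if, rule Z_ge1_if)
  fix n w assume w: "w \<in> words N n"
  have "0 \<le> t * ln (opnorm (Aw A w))" using ln_bounds(2)[OF w] assms by (simp add: mult_nonpos_nonpos)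
  then show "1 \<le> tm t 0 w" by (simp add: tm_exp[OF w])
qed

definition Cst where "Cst = ln sig / ln lmax"

lemma Cst_nonneg: "0 \<le> Cst" unfolding Cst_def using ln_sig ln_lmax by (simp add: divide_nonpos_neg)

lemma P_upper: assumes t: "t \<ge> 0" shows "P t \<le> Cst * t"
proof (rule P_le, rule F_nonneg_if, rule Z_ge1_if)
  fix n w assume w: "w \<in> words N n"
  have a: "t * (real n * ln sig) \<le> t * ln (opnorm (Aw A w))"
    using ln_bounds(1)[OF w] t by (intro mult_left_mono) auto
  have b: "Cst * t * ln (lamw lam w) \<le> Cst * t * (real n * ln lmax)"
    using ln_bounds(4)[OF w] t Cst_nonneg by (intro mult_left_mono) auto
  have c: "Cst * t * (real n * ln lmax) = t * (real n * ln sig)"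
    unfolding Cst_def using ln_lmax by (simp add: field_simps)
  have "0 \<le> t * ln (opnorm (Aw A w)) - Cst * t * ln (lamw lam w)" using a b c by linarith
  then show "1 \<le> tm t (Cst * t) w" by (simp add: tm_exp[OF w])
qed

lemma sum_powr_le:
  fixes f :: "'a \<Rightarrow> real"
  assumes fin: "finite S" and pos: "\<And>x. x \<in> S \<Longrightarrow> 0 < f x" and s: "1 \<le> s" and ne: "S \<noteq> {}"
  shows "(\<Sum>x\<in>S. f x powr s) \<le> (\<Sum>x\<in>S. f x) powr s"
proof -
  define T where "T = (\<Sum>x\<in>S. f x)"
  obtain x0 where x0: "x0 \<in> S" using ne by auto
  have "f x0 \<le> T" unfolding T_def using fin x0 pos by (intro member_le_sum) (auto intro: less_imp_le)
  then have Tpos: "0 < T" using pos[OF x0] by linarith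
  have "(\<Sum>x\<in>S. f x powr s) \<le> (\<Sum>x\<in>S. f x * T powr (s - 1))"
  proof (rule sum_mono)
    fix x assume x: "x \<in> S"
    have fxT: "f x \<le> T" unfolding T_def using fin x pos by (intro member_le_sum) (auto intro: less_imp_le)
    have "f x powr s = f x * f x powr (s - 1)" using pos[OF x] by (simp add: powr_diff)
    also have "\<dots> \<le> f x * T powr (s - 1)"
      using pos[OF x] fxT s by (intro mult_left_mono powr_mono2) auto
    finally show "f x powr s \<le> f x * T powr (s - 1)" .
  qed
  also have "\<dots> = T * T powr (s - 1)" unfolding T_def by (simp add: sum_distrib_right)
  also have "\<dots> = T powr s" using Tpos by (simp add: powr_diff)
  finally show ?thesis unfolding T_def .
qed

lemma P_scale: assumes s: "1 \<le> s" shows "s * P t \<le> P (s * t)"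
proof (rule P_ge)
  let ?p = "P t"
  have Zle: "Z (s * t) (s * ?p) n \<le> Z t ?p n powr s" for n
  proof -
    have "Z (s * t) (s * ?p) n = (\<Sum>w\<in>words N n. tm t ?p w powr s)"
      unfolding Z_def
    proof (rule sum.cong)
      fix w assume w: "w \<in> words N n"
      show "tm (s * t) (s * ?p) w = tm t ?p w powr s"
        by (simp add: tm_exp[OF w] powr_def algebra_simps)
    qed simp
    also have "\<dots> \<le> Z t ?p n powr s" unfolding Z_def
      using finite_words tm_pos s words_ne[of N n] N2 by (intro sum_powr_le) auto
    finally show ?thesis .
  qed
  have l: "(\<lambda>n. s * (ln (Z t ?p n) / real n)) \<longlonglongrightarrow> s * 0"
    by (intro tendsto_mult tendsto_const P_lim)
  have "F (s * t) (s * ?p) \<le> s * 0"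
  proof (rule LIMSEQ_le[OF F_lim l], intro exI allI impI)
    fix n :: nat assume "n \<ge> 0"
    have "ln (Z (s * t) (s * ?p) n) \<le> ln (Z t ?p n powr s)"
      using Zle Z_pos by (intro ln_mono) auto
    also have "\<dots> = s * ln (Z t ?p n)" using Z_pos[of t ?p n] by (simp add: ln_powr)
    finally have "ln (Z (s * t) (s * ?p) n) \<le> s * ln (Z t ?p n)" .
    then have "ln (Z (s * t) (s * ?p) n) / real n \<le> s * ln (Z t ?p n) / real n"
      by (intro divide_right_mono) auto
    then show "ln (Z (s * t) (s * ?p) n) / real n \<le> s * (ln (Z t ?p n) / real n)" by simp
  qed
  then show "F (s * t) (s * ?p) \<le> 0" by simp
qed

end


context sys begin

lemma g_mono_pos: assumes "0 < t1" "t1 \<le> t2" shows "P t1 / t1 \<le> P t2 / t2"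
proof -
  define s where "s = t2 / t1"
  have s: "1 \<le> s" "s * t1 = t2" using assms by (auto simp: s_def field_simps)
  have "s * P t1 \<le> P t2" using P_scale[OF s(1), of t1] s(2) by simp
  then have "s * P t1 / t2 \<le> P t2 / t2" using assms by (intro divide_right_mono) auto
  moreover have "s * P t1 / t2 = P t1 / t1" using assms s(2)[symmetric] by (simp add: field_simps)
  ultimately show ?thesis by simp
qed

lemma g_mono_neg: assumes "t2 \<le> t1" "t1 < 0" shows "P t2 / t2 \<le> P t1 / t1"
proof -
  define s where "s = t2 / t1"
  have s: "1 \<le> s" "s * t1 = t2" using assms by (auto simp: s_def field_simps)
  have "s * P t1 \<le> P t2" using P_scale[OF s(1), of t1] s(2) by simp
  then have "P t2 / t2 \<le> s * P t1 / t2" using assms by (intro divide_right_mono_neg) auto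
  moreover have "s * P t1 / t2 = P t1 / t1" using assms s(2)[symmetric] by (simp add: field_simps)
  ultimately show ?thesis by simp
qed

lemma P_le_alpha_min: assumes "0 < t" shows "P t \<le> t * alpha_min N A lam"
proof -
  let ?g = "\<lambda>t. P t / t"
  define L where "L = (SUP t\<in>{0<..}. ?g t)"
  have bdd: "bdd_above (?g ` {0<..})"
  proof (rule bdd_aboveI2)
    fix x :: real assume "x \<in> {0<..}"
    then show "?g x \<le> Cst" using P_upper[of x] by (simp add: divide_le_eq mult.commute)
  qed
  have ne: "{0<..} \<noteq> ({} :: real set)" by (auto intro: exI[of _ 1])
  have upper: "?g t \<le> L" if "0 < t" for t unfolding L_def using bdd that by (intro cSUP_upper) auto
  have "(?g \<longlongrightarrow> L) at_top"
  proof (rule order_tendstoI)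
    fix a assume "a < L"
    then obtain t0 where t0: "0 < t0" "a < ?g t0" unfolding L_def using less_cSUP_iff[OF ne bdd] by auto
    show "eventually (\<lambda>t. a < ?g t) at_top"
      using eventually_ge_at_top[of t0] by eventually_elim (use t0 g_mono_pos in force)
  next
    fix a assume "L < a"
    show "eventually (\<lambda>t. ?g t < a) at_top"
      using eventually_gt_at_top[of 0] by eventually_elim (use upper \<open>L < a\<close> in force)
  qed
  then have "alpha_min N A lam = L" unfolding alpha_min_def by (intro tendsto_Lim) auto
  then have "?g t \<le> alpha_min N A lam" using upper assms by simp
  then show ?thesis using assms by (simp add: divide_le_eq mult.commute)
qed

lemma P_le_alpha_max: assumes "t < 0" shows "P t \<le> t * alpha_max N A lam"
proof -
  let ?g = "\<lambda>t. P t / t"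
  define L where "L = (INF t\<in>{..<0}. ?g t)"
  have bdd: "bdd_below (?g ` {..<0})"
  proof (rule bdd_belowI2)
    fix x :: real assume "x \<in> {..<0}"
    then show "0 \<le> ?g x" using P_nonpos[of x] by (simp add: divide_nonpos_neg)
  qed
  have ne: "{..<0} \<noteq> ({} :: real set)" by (auto intro: exI[of _ "-1"])
  have lower: "L \<le> ?g t" if "t < 0" for t unfolding L_def using bdd that by (intro cINF_lower) auto
  have "(?g \<longlongrightarrow> L) at_bot"
  proof (rule order_tendstoI)
    fix a assume "L < a"
    then obtain t0 where t0: "t0 < 0" "?g t0 < a" unfolding L_def using cINF_less_iff[OF ne bdd] by auto
    show "eventually (\<lambda>t. ?g t < a) at_bot"
      using eventually_le_at_bot[of t0] by eventually_elim (use t0 g_mono_neg in force)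
  next
    fix a assume "a < L"
    have "eventually (\<lambda>t. t < (0::real)) at_bot"
      unfolding eventually_at_bot_dense by auto
    then show "eventually (\<lambda>t. a < ?g t) at_bot"
      by eventually_elim (use lower \<open>a < L\<close> in force)
  qed
  then have "alpha_max N A lam = L" unfolding alpha_max_def by (intro tendsto_Lim) auto
  then have "alpha_max N A lam \<le> ?g t" using lower assms by simp
  then show ?thesis using assms by (simp add: le_divide_eq mult.commute)
qed

lemma rhs_nonneg_pos: assumes "0 \<le> t" "alpha_min N A lam \<le> \<alpha>" shows "0 \<le> t * \<alpha> - P t"
proof (cases "t = 0")
  case True then show ?thesis using P_nonpos[of 0] by simp
next
  case False
  then have "P t \<le> t * alpha_min N A lam" using assms P_le_alpha_min by simp
  also have "\<dots> \<le> t * \<alpha>" using assms by (intro mult_left_mono) auto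
  finally show ?thesis by simp
qed

lemma rhs_nonneg_neg: assumes "t \<le> 0" "\<alpha> \<le> alpha_max N A lam" shows "0 \<le> t * \<alpha> - P t"
proof (cases "t = 0")
  case True then show ?thesis using P_nonpos[of 0] by simp
next
  case False
  then have "P t \<le> t * alpha_max N A lam" using assms P_le_alpha_max by simp
  also have "\<dots> \<le> t * \<alpha>" using assms by (intro mult_left_mono_neg) auto
  finally show ?thesis by simp
qed

end


lemma sdiam_le:
  assumes "0 \<le> B" and "\<And>x y. x \<in> U \<Longrightarrow> y \<in> U \<Longrightarrow> 0 \<le> d x y \<and> d x y \<le> B"
  shows "0 \<le> sdiam d U" "sdiam d U \<le> B"
proof -
  have "0 \<le> sdiam d U \<and> sdiam d U \<le> B"
  proof (cases "U = {}")
    case True then show ?thesis using assms by (simp add: sdiam_def)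
  next
    case False
    have inner: "(SUP y\<in>U. d x y) \<le> B" if "x \<in> U" for x
      by (rule cSUP_least) (use False assms that in auto)
    have innerge: "0 \<le> (SUP y\<in>U. d x y)" if "x \<in> U" for x
    proof -
      have "bdd_above ((\<lambda>y. d x y) ` U)" using assms that by (intro bdd_aboveI2[of _ _ B]) auto
      then have "d x x \<le> (SUP y\<in>U. d x y)" using that by (intro cSUP_upper) auto
      then show ?thesis using assms that by (meson order_trans)
    qed
    have bdd: "bdd_above ((\<lambda>x. SUP y\<in>U. d x y) ` U)" using inner by (intro bdd_aboveI2[of _ _ B]) auto
    obtain x where x: "x \<in> U" using False by auto
    have "(SUP y\<in>U. d x y) \<le> (SUP x\<in>U. SUP y\<in>U. d x y)" using bdd x by (intro cSUP_upper) auto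
    then have "0 \<le> (SUP x\<in>U. SUP y\<in>U. d x y)" using innerge[OF x] by linarith
    moreover have "(SUP x\<in>U. SUP y\<in>U. d x y) \<le> B" by (rule cSUP_least) (use False inner in auto)
    ultimately show ?thesis using False by (simp add: sdiam_def)
  qed
  then show "0 \<le> sdiam d U" "sdiam d U \<le> B" by auto
qed

context sys begin

definition cyl :: "nat list \<Rightarrow> (nat \<Rightarrow> nat) set" where
  "cyl w = {i \<in> symspace N. pref i (length w) = w}"

lemma symdist_cyl:
  assumes w: "w \<in> words N m" and i: "i \<in> cyl w" and j: "j \<in> cyl w"
  shows "0 \<le> symdist lam i j \<and> symdist lam i j \<le> lamw lam w"
proof (cases "i = j")
  case True then show ?thesis using lamw_bounds(3)[OF w] by (simp add: symdist_def)
next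
  case False
  have lw: "length w = m" using w by (simp add: words_def)
  have iS: "i \<in> symspace N" and pi: "pref i m = w" and pj: "pref j m = w"
    using i j lw by (auto simp: cyl_def)
  have eqk: "i k = j k" if "k < m" for k
  proof -
    have "pref i m ! k = pref j m ! k" using pi pj by simp
    then show ?thesis using that by (simp add: pref_def)
  qed
  obtain n where "i n \<noteq> j n" using False by auto
  then have c: "i (cpl i j) \<noteq> j (cpl i j)" unfolding cpl_def by (rule LeastI)
  then have mc: "m \<le> cpl i j" using eqk by (meson not_le)
  define r where "r = cpl i j - m"
  have "pref i (cpl i j) = w @ map i [m..<m + r]" using pref_add[of i m r] pi mc by (simp add: r_def)
  then have eq: "lamw lam (pref i (cpl i j)) = lamw lam w * lamw lam (map i [m..<m+r])"
    by (simp add: lamw_append)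
  have mw: "map i [m..<m+r] \<in> words N r" using iS by (auto simp: words_def symspace_def)
  have "lamw lam w * lamw lam (map i [m..<m+r]) \<le> lamw lam w * 1"
    using lamw_le1[OF mw] lamw_bounds(3)[OF w] by (intro mult_left_mono) auto
  moreover have "0 < lamw lam w * lamw lam (map i [m..<m+r])"
    using lamw_bounds(3)[OF w] lamw_bounds(3)[OF mw] by simp
  ultimately show ?thesis using False eq by (simp add: symdist_def)
qed

lemma sdiam_cyl:
  assumes w: "w \<in> words N m"
  shows "0 \<le> sdiam (symdist lam) (cyl w)" "sdiam (symdist lam) (cyl w) \<le> lamw lam w"
  using sdiam_le[of "lamw lam w" "cyl w" "symdist lam"] symdist_cyl[OF w] lamw_bounds(3)[OF w] by auto

end


lemma geom_tail:
  fixes \<rho> :: real assumes "0 < \<rho>" "\<rho> < 1"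
  shows "(\<Sum>m\<le>K. if n \<le> m then \<rho> ^ m else 0) \<le> \<rho> ^ n / (1 - \<rho>)"
proof -
  have "(\<Sum>m\<le>K. if n \<le> m then \<rho> ^ m else 0) = (\<Sum>m\<in>{..K} \<inter> {m. n \<le> m}. \<rho> ^ m)"
    by (simp add: sum.If_cases)
  also have "{..K} \<inter> {m. n \<le> m} = {n..K}" by auto
  also have "(\<Sum>m\<in>{n..K}. \<rho> ^ m) \<le> \<rho> ^ n / (1 - \<rho>)"
    using assms by (auto simp: sum_gp divide_right_mono)
  finally show ?thesis .
qed

context sys begin

lemma pre_bound:
  fixes good :: "nat list \<Rightarrow> bool"
  assumes s: "0 < s" and del: "lmax ^ n \<le> \<delta>" and rho: "0 < \<rho>" "\<rho> < 1"
    and sumh: "\<And>m. n \<le> m \<Longrightarrow> (\<Sum>w\<in>words N m. if good w then lamw lam w powr s else 0) \<le> \<rho> ^ m"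
    and cov: "\<And>i. i \<in> E \<Longrightarrow> \<exists>m\<ge>n. good (pref i m)"
    and E: "E \<subseteq> symspace N"
  shows "hausdorff_pre (symspace N) (symdist lam) s \<delta> E \<le> ennreal (\<rho> ^ n / (1 - \<rho>))"
proof -
  define h where "h w = (if good w then lamw lam w powr s else 0)" for w
  have h0: "0 \<le> h w" for w by (simp add: h_def)
  define c where "c m = card (words N m)" for m
  define en where "en m = (SOME f. bij_betw f {..<c m} (words N m))" for m
  have en: "bij_betw (en m) {..<c m} (words N m)" for m
  proof -
    have "\<exists>f. bij_betw f {..<c m} (words N m)"
      using ex_bij_betw_nat_finite[OF finite_words[of N m]] by (simp add: c_def atLeast0LessThan)
    then show ?thesis unfolding en_def by (rule someI_ex)
  qed
  define U where "U k = (case prod_decode k of (m, j) \<Rightarrow>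
      if n \<le> m \<and> j < c m \<and> good (en m j) then cyl (en m j) else {})" for k
  define G2 where "G2 x = (case x of (m, j) \<Rightarrow> if n \<le> m \<and> j < c m then h (en m j) else 0)" for x
  have G20: "0 \<le> G2 x" for x by (auto simp: G2_def h0 split: prod.splits)
  have Usub: "U k \<subseteq> symspace N" for k by (auto simp: U_def cyl_def split: prod.splits)
  have Udiam: "0 \<le> sdiam (symdist lam) (U k) \<and> sdiam (symdist lam) (U k) \<le> \<delta> \<and>
      sdiam (symdist lam) (U k) powr s \<le> G2 (prod_decode k)" for k
  proof (cases "prod_decode k")
    case (Pair m j)
    show ?thesis
    proof (cases "n \<le> m \<and> j < c m \<and> good (en m j)")
      case True
      have w: "en m j \<in> words N m" using en[of m] True by (auto simp: bij_betw_def)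
      have U: "U k = cyl (en m j)" using True Pair by (simp add: U_def)
      note d = sdiam_cyl[OF w]
      have "lamw lam (en m j) \<le> lmax ^ m" using lamw_bounds(2)[OF w] .
      also have "\<dots> \<le> lmax ^ n" using True lmax by (intro power_decreasing) auto
      finally have "sdiam (symdist lam) (cyl (en m j)) \<le> \<delta>" using d(2) del by linarith
      then have "sdiam (symdist lam) (U k) \<le> \<delta>" using U by simp
      moreover have "sdiam (symdist lam) (U k) powr s \<le> lamw lam (en m j) powr s"
        using d U s by (intro powr_mono2) auto
      moreover have "G2 (prod_decode k) = lamw lam (en m j) powr s" using Pair True by (simp add: G2_def h_def)
      ultimately show ?thesis using d U by simp
    next
      case False
      then have "U k = {}" using Pair by (auto simp: U_def)
      moreover have "0 \<le> \<delta>" using del lmax by (meson order_trans zero_le_power less_imp_le)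
      ultimately show ?thesis using G20 by (simp add: sdiam_def)
    qed
  qed
  have Ecov: "E \<subseteq> (\<Union>k. U k)"
  proof
    fix i assume i: "i \<in> E"
    obtain m where m: "m \<ge> n" "good (pref i m)" using cov[OF i] by blast
    have w: "pref i m \<in> words N m" using E i by (auto intro: pref_words)
    then have "pref i m \<in> en m ` {..<c m}" using en[of m] by (simp add: bij_betw_def)
    then obtain j where j: "j < c m" "en m j = pref i m" by auto
    have "U (prod_encode (m, j)) = cyl (pref i m)" using m j by (simp add: U_def)
    moreover have "i \<in> cyl (pref i m)" using E i by (auto simp: cyl_def)
    ultimately show "i \<in> (\<Union>k. U k)" by blast
  qed
  have fin: "(\<Sum>k<K. G2 (prod_decode k)) \<le> \<rho> ^ n / (1 - \<rho>)" for K
  proof -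
    have "(\<Sum>k<K. G2 (prod_decode k)) = sum G2 (prod_decode ` {..<K})"
      by (simp add: sum.reindex[OF inj_prod_decode])
    also have "\<dots> \<le> sum G2 ({..K} \<times> {..K})"
    proof (rule sum_mono2)
      show "prod_decode ` {..<K} \<subseteq> {..K} \<times> {..K}"
      proof
        fix x assume "x \<in> prod_decode ` {..<K}"
        then obtain k where k: "k < K" "x = prod_decode k" by auto
        obtain a b where ab: "x = (a, b)" by (cases x)
        have "prod_encode (a, b) = k" using k ab by (metis prod_decode_inverse)
        moreover have "a \<le> prod_encode (a, b)" by (rule le_prod_encode_1)
        moreover have "b \<le> prod_encode (a, b)" by (rule le_prod_encode_2)
        ultimately have "a \<le> k" "b \<le> k" by auto
        then show "x \<in> {..K} \<times> {..K}" using k(1) ab by auto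
      qed
    qed (auto simp: G20)
    also have "\<dots> = (\<Sum>m\<le>K. \<Sum>j\<le>K. G2 (m, j))" by (simp add: sum.cartesian_product)
    also have "\<dots> \<le> (\<Sum>m\<le>K. if n \<le> m then \<rho> ^ m else 0)"
    proof (rule sum_mono)
      fix m assume "m \<in> {..K}"
      have "(\<Sum>j\<le>K. G2 (m, j)) = (\<Sum>j\<in>{..K} \<inter> {..<c m}. G2 (m, j))"
        by (rule sum.mono_neutral_right) (auto simp: G2_def)
      also have "\<dots> \<le> (\<Sum>j<c m. G2 (m, j))" by (rule sum_mono2) (auto simp: G20)
      also have "\<dots> \<le> (if n \<le> m then \<rho> ^ m else 0)"
      proof (cases "n \<le> m")
        case True
        have "(\<Sum>j<c m. G2 (m, j)) = (\<Sum>j<c m. h (en m j))" using True by (simp add: G2_def)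
        also have "\<dots> = (\<Sum>w\<in>words N m. h w)" by (rule sum.reindex_bij_betw[OF en])
        also have "\<dots> \<le> \<rho> ^ m" using sumh[OF True] by (simp add: h_def)
        finally show ?thesis using True by simp
      qed (simp add: G2_def)
      finally show "(\<Sum>j\<le>K. G2 (m, j)) \<le> (if n \<le> m then \<rho> ^ m else 0)" .
    qed
    also have "\<dots> \<le> \<rho> ^ n / (1 - \<rho>)" by (rule geom_tail[OF rho])
    finally show ?thesis .
  qed
  have "hausdorff_pre (symspace N) (symdist lam) s \<delta> E \<le> (\<Sum>k. ennreal (sdiam (symdist lam) (U k) powr s))"
    unfolding hausdorff_pre_def using Usub Udiam Ecov by (intro INF_lower) auto
  also have "\<dots> \<le> ennreal (\<rho> ^ n / (1 - \<rho>))"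
  proof (rule suminf_le_const[OF summableI])
    fix K
    have "(\<Sum>k<K. ennreal (sdiam (symdist lam) (U k) powr s)) = ennreal (\<Sum>k<K. sdiam (symdist lam) (U k) powr s)"
      by (rule sum_ennreal) simp
    also have "\<dots> \<le> ennreal (\<rho> ^ n / (1 - \<rho>))"
    proof (rule ennreal_leI)
      have "(\<Sum>k<K. sdiam (symdist lam) (U k) powr s) \<le> (\<Sum>k<K. G2 (prod_decode k))"
        using Udiam by (intro sum_mono) auto
      then show "(\<Sum>k<K. sdiam (symdist lam) (U k) powr s) \<le> \<rho> ^ n / (1 - \<rho>)" using fin[of K] by linarith
    qed
    finally show "(\<Sum>k<K. ennreal (sdiam (symdist lam) (U k) powr s)) \<le> ennreal (\<rho> ^ n / (1 - \<rho>))" .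
  qed
  finally show ?thesis .
qed

end


context sys begin

lemma cover_zero:
  assumes plim: "(\<lambda>n. ln (Z t p n) / real n) \<longlonglongrightarrow> 0"
    and E: "E \<subseteq> symspace N"
    and freq: "\<And>i n. i \<in> E \<Longrightarrow> \<exists>m\<ge>n. lamw lam (pref i m) powr b \<le> opnorm (Aw A (pref i m)) powr t"
    and eta: "0 < \<eta>" and spos: "0 < b - p + \<eta>"
  shows "hausdorff_outer (symspace N) (symdist lam) (b - p + \<eta>) E = 0"
proof -
  define s where "s = b - p + \<eta>"
  define good where "good w \<longleftrightarrow> lamw lam w powr b \<le> opnorm (Aw A w) powr t" for w
  define \<rho> where "\<rho> = exp (\<eta>/2 * ln lmax)"
  have e2: "0 < \<eta>/2" using eta by simp
  have "\<eta>/2 * ln lmax < 0" by (rule mult_pos_neg[OF e2 ln_lmax])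
  then have rho: "0 < \<rho>" "\<rho> < 1" by (auto simp: \<rho>_def)
  have c0: "0 < \<eta>/2 * (- ln lmax)" using e2 ln_lmax by (intro mult_pos_pos) auto
  obtain M0 where M0: "\<And>m. m \<ge> M0 \<Longrightarrow> ln (Z t p m) / real m < \<eta>/2 * (- ln lmax)"
  proof -
    have "eventually (\<lambda>m. ln (Z t p m) / real m < \<eta>/2 * (- ln lmax)) sequentially"
      using order_tendstoD(2)[OF plim c0] .
    then show ?thesis using that by (auto simp: eventually_sequentially)
  qed
  have sumh: "(\<Sum>w\<in>words N m. if good w then lamw lam w powr s else 0) \<le> \<rho> ^ m"
    if m: "m \<ge> max M0 1" for m
  proof -
    have m1: "real m > 0" using m by simp
    have "ln (Z t p m) < real m * (\<eta>/2 * (- ln lmax))"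
      using M0[of m] m m1 by (simp add: divide_less_eq mult.commute)
    then have "exp (ln (Z t p m)) < exp (real m * (\<eta>/2 * (- ln lmax)))" by simp
    then have Zb: "Z t p m \<le> exp (real m * (\<eta>/2 * (- ln lmax)))" using Z_pos[of t p m] by simp
    have "(\<Sum>w\<in>words N m. if good w then lamw lam w powr s else 0)
          \<le> (\<Sum>w\<in>words N m. tm t p w * exp (\<eta> * (real m * ln lmax)))"
    proof (rule sum_mono)
      fix w assume w: "w \<in> words N m"
      have lpos: "0 < lamw lam w" using lamw_bounds(3)[OF w] .
      have e: "lamw lam w powr \<eta> \<le> exp (\<eta> * (real m * ln lmax))"
        using ln_bounds(4)[OF w] eta lpos by (simp add: powr_def)
      have tm0: "0 \<le> tm t p w" using tm_pos[OF w] by (simp add: less_imp_le)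
      show "(if good w then lamw lam w powr s else 0) \<le> tm t p w * exp (\<eta> * (real m * ln lmax))"
      proof (cases "good w")
        case True
        have "lamw lam w powr s = lamw lam w powr b * lamw lam w powr (- p) * lamw lam w powr \<eta>"
          using lpos by (simp add: s_def powr_add[symmetric])
        also have "\<dots> \<le> opnorm (Aw A w) powr t * lamw lam w powr (- p) * lamw lam w powr \<eta>"
          using True unfolding good_def by (intro mult_right_mono) auto
        also have "\<dots> = tm t p w * lamw lam w powr \<eta>" by (simp add: tm_def)
        also have "\<dots> \<le> tm t p w * exp (\<eta> * (real m * ln lmax))" using e tm0 by (intro mult_left_mono) auto
        finally show ?thesis using True by simp
      qed (simp add: tm0)
    qed
    also have "\<dots> = Z t p m * exp (\<eta> * (real m * ln lmax))" by (simp add: Z_def sum_distrib_right)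
    also have "\<dots> \<le> exp (real m * (\<eta>/2 * (- ln lmax))) * exp (\<eta> * (real m * ln lmax))"
      using Zb by (intro mult_right_mono) auto
    also have "\<dots> = exp (real m * (\<eta>/2 * ln lmax))" by (simp add: exp_add[symmetric] algebra_simps)
    also have "\<dots> = \<rho> ^ m" unfolding \<rho>_def by (rule exp_of_nat_mult)
    finally show ?thesis .
  qed
  have pre0: "hausdorff_pre (symspace N) (symdist lam) s \<delta> E = 0" if del: "0 < \<delta>" for \<delta>
  proof -
    have "hausdorff_pre (symspace N) (symdist lam) s \<delta> E \<le> 0 + ennreal e" if e: "0 < e" for e
    proof -
      have ev: "eventually (\<lambda>n. lmax ^ n < \<delta> \<and> \<rho> ^ n / (1 - \<rho>) < e \<and> max M0 1 \<le> n) sequentially"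
      proof (intro eventually_conj)
        show "eventually (\<lambda>n. lmax ^ n < \<delta>) sequentially"
          using order_tendstoD(2)[OF LIMSEQ_realpow_zero del] lmax by auto
        have "(\<lambda>n. \<rho> ^ n / (1 - \<rho>)) \<longlonglongrightarrow> 0 / (1 - \<rho>)"
          using rho by (intro tendsto_divide LIMSEQ_realpow_zero tendsto_const) auto
        then show "eventually (\<lambda>n. \<rho> ^ n / (1 - \<rho>) < e) sequentially"
          using order_tendstoD(2) e by auto
        show "eventually (\<lambda>n. max M0 1 \<le> n) sequentially" by (rule eventually_ge_at_top)
      qed
      then obtain n where n: "lmax ^ n < \<delta>" "\<rho> ^ n / (1 - \<rho>) < e" "max M0 1 \<le> n"
        unfolding eventually_sequentially by blast
      have "hausdorff_pre (symspace N) (symdist lam) s \<delta> E \<le> ennreal (\<rho> ^ n / (1 - \<rho>))"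
      proof (rule pre_bound[where good=good])
        show "0 < s" using spos s_def by simp
        show "lmax ^ n \<le> \<delta>" using n by simp
        show "0 < \<rho>" "\<rho> < 1" using rho .
        show "(\<Sum>w\<in>words N m. if good w then lamw lam w powr s else 0) \<le> \<rho> ^ m" if "n \<le> m" for m
          using sumh[of m] that n by simp
        show "\<exists>m\<ge>n. good (pref i m)" if "i \<in> E" for i using freq[OF that, of n] by (simp add: good_def)
        show "E \<subseteq> symspace N" using E .
      qed
      also have "\<dots> \<le> ennreal e" using n by (intro ennreal_leI) simp
      finally show ?thesis by simp
    qed
    then have "hausdorff_pre (symspace N) (symdist lam) s \<delta> E \<le> 0" by (rule ennreal_le_epsilon) auto
    then show ?thesis by simp
  qed
  show ?thesis unfolding hausdorff_outer_def s_def[symmetric] using pre0 by simp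
qed

lemma dim_le:
  assumes E: "E \<subseteq> symspace N" and R: "0 \<le> t * \<alpha> - P t"
    and fr: "\<And>\<epsilon> i n. 0 < \<epsilon> \<Longrightarrow> i \<in> E \<Longrightarrow> \<exists>m\<ge>n. lamw lam (pref i m) powr (t * \<beta> \<epsilon>) \<le> opnorm (Aw A (pref i m)) powr t"
    and b1: "\<And>\<epsilon>. 0 < \<epsilon> \<Longrightarrow> t * \<alpha> \<le> t * \<beta> \<epsilon>"
    and b2: "\<And>\<epsilon>. 0 < \<epsilon> \<Longrightarrow> t * \<beta> \<epsilon> \<le> t * \<alpha> + \<bar>t\<bar> * \<epsilon>"
  shows "hausdorff_dim (symspace N) (symdist lam) E \<le> ereal (t * \<alpha> - P t)"
proof (rule ereal_le_epsilon2)
  fix e :: real assume e: "0 < e"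
  define \<epsilon> where "\<epsilon> = e / (2 * (\<bar>t\<bar> + 1))"
  have eps: "0 < \<epsilon>" using e by (simp add: \<epsilon>_def add_pos_nonneg)
  have teps: "\<bar>t\<bar> * \<epsilon> \<le> e / 2"
  proof -
    have "\<bar>t\<bar> * \<epsilon> \<le> (\<bar>t\<bar> + 1) * \<epsilon>" using eps by (intro mult_right_mono) auto
    also have "\<dots> = e / 2" unfolding \<epsilon>_def by (simp add: field_simps add_pos_nonneg)
    finally show ?thesis .
  qed
  define s where "s = t * \<beta> \<epsilon> - P t + e / 2"
  have spos: "0 < s" using b1[OF eps] R e by (simp add: s_def)
  have H: "hausdorff_outer (symspace N) (symdist lam) s E = 0"
    unfolding s_def using e spos[unfolded s_def] fr[OF eps] E
    by (intro cover_zero[OF P_lim]) auto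
  have "hausdorff_dim (symspace N) (symdist lam) E \<le> ereal s"
    unfolding hausdorff_dim_def using spos H by (intro INF_lower) auto
  also have "ereal s \<le> ereal (t * \<alpha> - P t) + ereal e"
    using b2[OF eps] teps by (simp add: s_def)
  finally show "hausdorff_dim (symspace N) (symdist lam) E \<le> ereal (t * \<alpha> - P t) + ereal e" .
qed

lemma ratio_conv:
  assumes w: "w \<in> words N m" and m: "1 \<le> m"
  shows "ln (opnorm (Aw A w)) / ln (lamw lam w) < \<beta> \<Longrightarrow> 0 \<le> t \<Longrightarrow> lamw lam w powr (t * \<beta>) \<le> opnorm (Aw A w) powr t"
    and "ln (opnorm (Aw A w)) / ln (lamw lam w) > \<beta> \<Longrightarrow> t \<le> 0 \<Longrightarrow> lamw lam w powr (t * \<beta>) \<le> opnorm (Aw A w) powr t"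
proof -
  have lneg: "ln (lamw lam w) < 0"
  proof -
    have "ln (lamw lam w) \<le> real m * ln lmax" using ln_bounds(4)[OF w] .
    also have "\<dots> < 0" using m ln_lmax by (simp add: mult_pos_neg)
    finally show ?thesis .
  qed
  have lpos: "0 < lamw lam w" and opos: "0 < opnorm (Aw A w)" using lamw_bounds(3)[OF w] opnorm_pos[OF w] by auto
  define r where "r = ln (opnorm (Aw A w)) / ln (lamw lam w)"
  have lo: "ln (opnorm (Aw A w)) = r * ln (lamw lam w)" unfolding r_def using lneg by simp
  show "ln (opnorm (Aw A w)) / ln (lamw lam w) < \<beta> \<Longrightarrow> 0 \<le> t \<Longrightarrow> lamw lam w powr (t * \<beta>) \<le> opnorm (Aw A w) powr t"
  proof -
    assume r: "ln (opnorm (Aw A w)) / ln (lamw lam w) < \<beta>" and t: "0 \<le> t"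
    have "\<beta> * ln (lamw lam w) \<le> r * ln (lamw lam w)" using r lneg unfolding r_def[symmetric]
      by (intro mult_right_mono_neg) auto
    then have "t * (\<beta> * ln (lamw lam w)) \<le> t * ln (opnorm (Aw A w))" using t lo by (intro mult_left_mono) auto
    then show ?thesis using lpos opos by (simp add: powr_def algebra_simps)
  qed
  show "ln (opnorm (Aw A w)) / ln (lamw lam w) > \<beta> \<Longrightarrow> t \<le> 0 \<Longrightarrow> lamw lam w powr (t * \<beta>) \<le> opnorm (Aw A w) powr t"
  proof -
    assume r: "ln (opnorm (Aw A w)) / ln (lamw lam w) > \<beta>" and t: "t \<le> 0"
    have "r * ln (lamw lam w) \<le> \<beta> * ln (lamw lam w)" using r lneg unfolding r_def[symmetric]
      by (intro mult_right_mono_neg) auto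
    then have "t * (\<beta> * ln (lamw lam w)) \<le> t * ln (opnorm (Aw A w))" using t lo by (intro mult_left_mono_neg) auto
    then show ?thesis using lpos opos by (simp add: powr_def algebra_simps)
  qed
qed

end


context sys begin

lemma part1:
  assumes t: "0 \<le> t" and al: "alpha_min N A lam \<le> \<alpha>"
  shows "hausdorff_dim (symspace N) (symdist lam)
           {i \<in> symspace N. liminf (\<lambda>m. ereal (lyap_ratio A lam i m)) \<le> ereal \<alpha>} \<le> ereal (t * \<alpha> - P t)"
proof (rule dim_le[where \<beta>="\<lambda>\<epsilon>. \<alpha> + \<epsilon>"])
  show "0 \<le> t * \<alpha> - P t" by (rule rhs_nonneg_pos[OF t al])
  fix \<epsilon> :: real assume eps: "0 < \<epsilon>"
  show "t * \<alpha> \<le> t * (\<alpha> + \<epsilon>)" using t eps by (simp add: algebra_simps)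
  show "t * (\<alpha> + \<epsilon>) \<le> t * \<alpha> + \<bar>t\<bar> * \<epsilon>" using t by (simp add: algebra_simps)
  fix i n assume i: "i \<in> {i \<in> symspace N. liminf (\<lambda>m. ereal (lyap_ratio A lam i m)) \<le> ereal \<alpha>}"
  then have iS: "i \<in> symspace N" and li: "liminf (\<lambda>m. ereal (lyap_ratio A lam i m)) \<le> ereal \<alpha>" by auto
  have "\<not> ereal (\<alpha> + \<epsilon>) \<le> liminf (\<lambda>m. ereal (lyap_ratio A lam i m))"
  proof
    assume "ereal (\<alpha> + \<epsilon>) \<le> liminf (\<lambda>m. ereal (lyap_ratio A lam i m))"
    then have "ereal (\<alpha> + \<epsilon>) \<le> ereal \<alpha>" using li by (rule order.trans)
    then show False using eps by simp
  qed
  then obtain y where y: "y < ereal (\<alpha> + \<epsilon>)" "\<not> eventually (\<lambda>m. y < ereal (lyap_ratio A lam i m)) sequentially"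
    unfolding le_Liminf_iff by auto
  then have "\<forall>N. \<exists>m\<ge>N. \<not> y < ereal (lyap_ratio A lam i m)"
    unfolding eventually_sequentially by auto
  then obtain m where m: "m \<ge> max n 1" "\<not> y < ereal (lyap_ratio A lam i m)" by blast
  then have "lyap_ratio A lam i m < \<alpha> + \<epsilon>" using y(1) by (metis less_ereal.simps(1) not_less order.strict_trans1)
  then have "lamw lam (pref i m) powr (t * (\<alpha> + \<epsilon>)) \<le> opnorm (Aw A (pref i m)) powr t"
    using ratio_conv(1)[OF pref_words[OF iS, of m], of "\<alpha> + \<epsilon>" t] m t by (simp add: lyap_ratio_def)
  then show "\<exists>m\<ge>n. lamw lam (pref i m) powr (t * (\<alpha> + \<epsilon>)) \<le> opnorm (Aw A (pref i m)) powr t"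
    using m by auto
qed auto

lemma part2:
  assumes t: "t \<le> 0" and al: "\<alpha> \<le> alpha_max N A lam"
  shows "hausdorff_dim (symspace N) (symdist lam)
           {i \<in> symspace N. limsup (\<lambda>m. ereal (lyap_ratio A lam i m)) \<ge> ereal \<alpha>} \<le> ereal (t * \<alpha> - P t)"
proof (rule dim_le[where \<beta>="\<lambda>\<epsilon>. \<alpha> - \<epsilon>"])
  show "0 \<le> t * \<alpha> - P t" by (rule rhs_nonneg_neg[OF t al])
  fix \<epsilon> :: real assume eps: "0 < \<epsilon>"
  have "t * \<epsilon> \<le> 0" using t eps by (simp add: mult_nonpos_nonneg)
  then show "t * \<alpha> \<le> t * (\<alpha> - \<epsilon>)" by (simp add: algebra_simps)
  show "t * (\<alpha> - \<epsilon>) \<le> t * \<alpha> + \<bar>t\<bar> * \<epsilon>" using t by (simp add: algebra_simps)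
  fix i n assume i: "i \<in> {i \<in> symspace N. limsup (\<lambda>m. ereal (lyap_ratio A lam i m)) \<ge> ereal \<alpha>}"
  then have iS: "i \<in> symspace N" and li: "limsup (\<lambda>m. ereal (lyap_ratio A lam i m)) \<ge> ereal \<alpha>" by auto
  have "\<not> ereal (\<alpha> - \<epsilon>) \<ge> limsup (\<lambda>m. ereal (lyap_ratio A lam i m))"
  proof
    assume "ereal (\<alpha> - \<epsilon>) \<ge> limsup (\<lambda>m. ereal (lyap_ratio A lam i m))"
    then have "ereal \<alpha> \<le> ereal (\<alpha> - \<epsilon>)" using li by (rule order.trans[rotated])
    then show False using eps by simp
  qed
  then obtain y where y: "y > ereal (\<alpha> - \<epsilon>)" "\<not> eventually (\<lambda>m. y > ereal (lyap_ratio A lam i m)) sequentially"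
    unfolding Limsup_le_iff by auto
  then have "\<forall>N. \<exists>m\<ge>N. \<not> y > ereal (lyap_ratio A lam i m)"
    unfolding eventually_sequentially by auto
  then obtain m where m: "m \<ge> max n 1" "\<not> y > ereal (lyap_ratio A lam i m)" by blast
  then have "lyap_ratio A lam i m > \<alpha> - \<epsilon>" using y(1) by (metis less_ereal.simps(1) not_less order.strict_trans2)
  then have "lamw lam (pref i m) powr (t * (\<alpha> - \<epsilon>)) \<le> opnorm (Aw A (pref i m)) powr t"
    using ratio_conv(2)[OF pref_words[OF iS, of m], of "\<alpha> - \<epsilon>" t] m t by (simp add: lyap_ratio_def)
  then show "\<exists>m\<ge>n. lamw lam (pref i m) powr (t * (\<alpha> - \<epsilon>)) \<le> opnorm (Aw A (pref i m)) powr t"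
    using m by auto
qed auto

end

theorem lemma2p5:
  fixes N :: nat and A :: "nat \<Rightarrow> real^'d^'d" and lam :: "nat \<Rightarrow> real" and \<alpha> :: real
  assumes N2: "2 \<le> N"
    and inv: "\<forall>i<N. invertible (A i)"
    and contr: "\<forall>i<N. opnorm (A i) < 1"
    and dom: "dominated_index1 N A"
    and lam_pos: "\<forall>i<N. 0 < lam i"
    and lam_sum: "(\<Sum>i<N. lam i) = 1"
    and alpha: "alpha_min N A lam \<le> \<alpha>" "\<alpha> \<le> alpha_max N A lam"
  shows "hausdorff_dim (symspace N) (symdist lam)
           {i \<in> symspace N. liminf (\<lambda>m. ereal (lyap_ratio A lam i m)) \<le> ereal \<alpha>}
         \<le> (INF t \<in> {0..}. ereal (t * \<alpha> - pressure N A lam t))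
     \<and> hausdorff_dim (symspace N) (symdist lam)
           {i \<in> symspace N. limsup (\<lambda>m. ereal (lyap_ratio A lam i m)) \<ge> ereal \<alpha>}
         \<le> (INF t \<in> {..0}. ereal (t * \<alpha> - pressure N A lam t))"
proof -
  interpret sys N A lam using N2 inv contr lam_pos lam_sum by unfold_locales
  show ?thesis
    using part1[OF _ alpha(1)] part2[OF _ alpha(2)] by (auto intro!: INF_greatest)
qed


end
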